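(* Let $\mu$ be a Borel probability measure on $\mathbb{R}^d$ and $p\ge1$. \textbf{A.} If $\phi\in W^{1,p}_\mu$ and $\psi\in C^1_b(\mathbb{R}^d)$, then $\psi\phi\in W^{1,p}_\mu$ and $\partial_i^\mu(\psi\phi)=\psi\,\partial_i^\mu\phi+\partial_i\psi\,\phi$, $i=1,\dots,d$. In particular, if $1\in W^{1,p}_\mu$, then every $\psi\in C^1_b(\mathbb{R}^d)$ belongs to $W^{1,p}_\mu$ and $\partial_i^\mu\psi=\psi\,\partial_i^\mu1+\partial_i\psi$. \textbf{B.} Suppose $1\in W^{1,p}_\mu$. If $\psi\in C^1_b(\mathbb{R}^m)$ and $u=(u_1,\dots,u_m):\mathbb{R}^d\to\mathbb{R}^m$ with $u_j\in C^1_b(\mathbb{R}^d)$, $j=1,\dots,m$, then $\psi\circ u\in W^{1,p}_\mu$ and $$\partial_i^\mu(\psi\circ u)=\sum_{j=1}^m(\partial_j\psi)\circ u\;\partial_i^\mu u_j+T_\psi\circ u\;\partial_i^\mu1,\qquad T_\psi(x)=\psi(x)-\sum_{j=1}^m\partial_j\psi(x)\,x_j\ (x\in\mathbb{R}^m).$$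
   Context: $L^p_\mu=\{\phi:\int|\phi|^pd\mu<\infty\}$. $W^{1,p}_\mu$ is the space of $\phi\in L^p_\mu$ such that for each $i=1,\dots,d$ there is $\theta_i\in L^p_\mu$ with $\int\partial_if\,\phi\,d\mu=-\int f\theta_i\,d\mu$ for all $f\in C_c^\infty(\mathbb{R}^d)$; one writes $\partial_i^\mu\phi:=\theta_i$. $C^1_b$ denotes $C^1$ functions which are bounded with bounded first derivatives. *)

theory Defs
  imports "HOL-Probability.Probability"
begin

definition partial :: "(real^'n \<Rightarrow> real) \<Rightarrow> 'n \<Rightarrow> real^'n \<Rightarrow> real" where
  "partial f i x = frechet_derivative f (at x) (axis i 1)"

fun iter_partial :: "(real^'n \<Rightarrow> real) \<Rightarrow> 'n list \<Rightarrow> real^'n \<Rightarrow> real" where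
  "iter_partial f [] = f"
| "iter_partial f (i # is) = partial (iter_partial f is) i"

definition smooth :: "(real^'n \<Rightarrow> real) \<Rightarrow> bool" where
  "smooth f \<longleftrightarrow> (\<forall>is x. iter_partial f is differentiable (at x))"

definition Cc_inf :: "(real^'n \<Rightarrow> real) set" where
  "Cc_inf = {f. smooth f \<and> compact (closure {x. f x \<noteq> 0})}"

definition C1b :: "(real^'n \<Rightarrow> real) set" where
  "C1b = {f. (\<forall>x. f differentiable (at x)) \<and> (\<forall>i. continuous_on UNIV (partial f i))
             \<and> bounded (range f) \<and> (\<forall>i. bounded (range (partial f i)))}"

definition Lp :: "(real^'n) measure \<Rightarrow> real \<Rightarrow> (real^'n \<Rightarrow> real) set" where
  "Lp \<mu> p = {\<phi>. \<phi> \<in> borel_measurable \<mu> \<and> (\<integral>\<^sup>+ x. ennreal (\<bar>\<phi> x\<bar> powr p) \<partial>\<mu>) < \<infinity>}"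

definition weak_deriv :: "(real^'n) measure \<Rightarrow> real \<Rightarrow> (real^'n \<Rightarrow> real) \<Rightarrow> 'n \<Rightarrow> (real^'n \<Rightarrow> real) \<Rightarrow> bool" where
  "weak_deriv \<mu> p \<phi> i \<theta> \<longleftrightarrow> \<theta> \<in> Lp \<mu> p \<and>
     (\<forall>f\<in>Cc_inf. (\<integral>x. partial f i x * \<phi> x \<partial>\<mu>) = - (\<integral>x. f x * \<theta> x \<partial>\<mu>))"

definition W1p :: "(real^'n) measure \<Rightarrow> real \<Rightarrow> (real^'n \<Rightarrow> real) set" where
  "W1p \<mu> p = {\<phi>. \<phi> \<in> Lp \<mu> p \<and> (\<forall>i. \<exists>\<theta>. weak_deriv \<mu> p \<phi> i \<theta>)}"

end

theory Submission
  imports Defs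
begin
lemma partial_eq: "(f has_derivative D) (at x) \<Longrightarrow> partial f i x = D (axis i 1)"
  unfolding partial_def by (metis frechet_derivative_at)

lemma partial_line:
  assumes "f differentiable (at x)"
  shows "((\<lambda>t. f (x + t *\<^sub>R axis i 1)) has_real_derivative partial f i x) (at 0)"
proof -
  have d: "(f has_derivative frechet_derivative f (at x)) (at x)"
    using assms frechet_derivative_works by blast
  have l: "((\<lambda>t::real. x + t *\<^sub>R axis i 1) has_derivative (\<lambda>t. t *\<^sub>R axis i 1)) (at 0)"
    by (auto intro!: derivative_eq_intros)
  have "((\<lambda>t. f (x + t *\<^sub>R axis i 1)) has_derivative (\<lambda>t. frechet_derivative f (at x) (t *\<^sub>R axis i 1))) (at 0)"
    using has_derivative_compose[OF l, of f] d by (simp add: o_def)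
  moreover have "linear (frechet_derivative f (at x))"
    using d has_derivative_linear by blast
  ultimately show ?thesis
    unfolding partial_def has_field_derivative_def
    by (simp add: linear_scale mult.commute[of _ "frechet_derivative f (at x) (axis i 1)"])
qed

lemma partial_line_unique:
  assumes "f differentiable (at x)"
    and "((\<lambda>t. f (x + t *\<^sub>R axis i 1)) has_real_derivative D) (at 0)"
  shows "partial f i x = D"
  using DERIV_unique partial_line[OF assms(1)] assms(2) by blast

lemma partial_add:
  assumes "f differentiable (at x)" "g differentiable (at x)"
  shows "partial (\<lambda>x. f x + g x) i x = partial f i x + partial g i x"
  by (rule partial_line_unique) (use assms partial_line in \<open>auto intro!: derivative_eq_intros\<close>)

lemma partial_mult:
  assumes "f differentiable (at x)" "g differentiable (at x)"
  shows "partial (\<lambda>x. f x * g x) i x = partial f i x * g x + f x * partial g i x"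
  by (rule partial_line_unique)
     (use assms partial_line[of f x i] partial_line[of g x i] in \<open>auto intro!: derivative_eq_intros\<close>)

lemma rpf_diff: "real_polynomial_function f \<Longrightarrow> f differentiable (at x)"
  by (rule differentiable_at_real_polynomial_function)

lemma rpf_partial_ex:
  fixes f :: "real^'n \<Rightarrow> real"
  assumes "real_polynomial_function f"
  shows "\<exists>g. real_polynomial_function g \<and> (\<forall>x. partial f i x = g x)"
  using assms
proof (induction f)
  case (linear f)
  then show ?case
    by (intro exI[of _ "\<lambda>_. f (axis i 1)"]) (auto intro: partial_eq bounded_linear_imp_has_derivative)
next
  case (const c)
  then show ?case
    by (intro exI[of _ "\<lambda>_. 0"]) (auto intro!: partial_eq[where D="\<lambda>_. 0"])
next
  case (add f g)
  then obtain a b where "real_polynomial_function a" "\<forall>x. partial f i x = a x"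
      "real_polynomial_function b" "\<forall>x. partial g i x = b x" by blast
  then show ?case using add.hyps
    by (intro exI[of _ "\<lambda>x. a x + b x"]) (auto simp: partial_add rpf_diff)
next
  case (mult f g)
  then obtain a b where "real_polynomial_function a" "\<forall>x. partial f i x = a x"
      "real_polynomial_function b" "\<forall>x. partial g i x = b x" by blast
  then show ?case using mult.hyps
    by (intro exI[of _ "\<lambda>x. a x * g x + f x * b x"]) (auto simp: partial_mult rpf_diff)
qed

lemma rpf_partial:
  fixes f :: "real^'n \<Rightarrow> real"
  assumes "real_polynomial_function f"
  shows "real_polynomial_function (partial f i)"
proof -
  obtain g where "real_polynomial_function g" "\<forall>x. partial f i x = g x"
    using rpf_partial_ex[OF assms] by blast
  moreover have "partial f i = g" using calculation by auto
  ultimately show ?thesis by simp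
qed

lemma rpf_iter:
  fixes f :: "real^'n \<Rightarrow> real"
  assumes "real_polynomial_function f"
  shows "real_polynomial_function (iter_partial f is)"
  by (induction "is") (auto simp: assms rpf_partial)

lemma rpf_smooth:
  fixes f :: "real^'n \<Rightarrow> real"
  assumes "real_polynomial_function f"
  shows "smooth f"
  unfolding smooth_def using rpf_iter[OF assms] rpf_diff by blast

lemma diff_sum_list:
  fixes A B :: "'p \<Rightarrow> real^'n \<Rightarrow> real"
  assumes "\<forall>p\<in>set L. \<forall>x. (A p) differentiable (at x) \<and> (B p) differentiable (at x)"
  shows "(\<lambda>x. \<Sum>p\<leftarrow>L. A p x * B p x) differentiable (at x)"
  using assms by (induction L) (auto intro!: differentiable_add differentiable_mult)

lemma partial_sum_list:
  fixes A B :: "'p \<Rightarrow> real^'n \<Rightarrow> real"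
  assumes "\<forall>p\<in>set L. \<forall>x. (A p) differentiable (at x) \<and> (B p) differentiable (at x)"
  shows "partial (\<lambda>x. \<Sum>p\<leftarrow>L. A p x * B p x) i x
     = (\<Sum>p\<leftarrow>L. partial (A p) i x * B p x + A p x * partial (B p) i x)"
  using assms
proof (induction L)
  case Nil
  then show ?case by (auto intro!: partial_eq[where D="\<lambda>_. 0"])
next
  case (Cons q L)
  have "partial (\<lambda>x. \<Sum>p\<leftarrow>q # L. A p x * B p x) i x
     = partial (\<lambda>x. A q x * B q x + (\<Sum>p\<leftarrow>L. A p x * B p x)) i x" by simp
  also have "\<dots> = partial (\<lambda>x. A q x * B q x) i x + partial (\<lambda>x. \<Sum>p\<leftarrow>L. A p x * B p x) i x"
    using Cons.prems by (intro partial_add) (auto intro!: differentiable_mult diff_sum_list)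
  also have "\<dots> = partial (A q) i x * B q x + A q x * partial (B q) i x
                   + (\<Sum>p\<leftarrow>L. partial (A p) i x * B p x + A p x * partial (B p) i x)"
    using Cons by (simp add: partial_mult)
  finally show ?case by simp
qed

lemma smooth_diff: "smooth F \<Longrightarrow> iter_partial F is differentiable (at x)"
  unfolding smooth_def by blast

lemma iter_partial_mult_repr:
  assumes "smooth F" "smooth G"
  shows "\<exists>L. iter_partial (\<lambda>x. F x * G x) is
       = (\<lambda>x. \<Sum>p\<leftarrow>L. iter_partial F (fst p) x * iter_partial G (snd p) x)"
proof (induction "is")
  case Nil
  show ?case by (intro exI[of _ "[([],[])]"]) simp
next
  case (Cons i "is")
  then obtain L where L: "iter_partial (\<lambda>x. F x * G x) is
       = (\<lambda>x. \<Sum>p\<leftarrow>L. iter_partial F (fst p) x * iter_partial G (snd p) x)" by blast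
  define L' where "L' = concat (map (\<lambda>p. [(i # fst p, snd p), (fst p, i # snd p)]) L)"
  have eq: "(\<Sum>p\<leftarrow>L'. iter_partial F (fst p) x * iter_partial G (snd p) x)
      = (\<Sum>p\<leftarrow>L. partial (iter_partial F (fst p)) i x * iter_partial G (snd p) x
           + iter_partial F (fst p) x * partial (iter_partial G (snd p)) i x)" for x
    unfolding L'_def by (induction L) auto
  show ?case
    apply (intro exI[of _ L'])
    apply (rule ext)
    apply (simp only: iter_partial.simps L eq)
    apply (rule partial_sum_list)
    using assms smooth_diff by blast
qed

lemma smooth_mult:
  assumes "smooth F" "smooth G"
  shows "smooth (\<lambda>x. F x * G x)"
  unfolding smooth_def
proof (intro allI)
  fix "is" x
  obtain L where L: "iter_partial (\<lambda>x. F x * G x) is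
       = (\<lambda>x. \<Sum>p\<leftarrow>L. iter_partial F (fst p) x * iter_partial G (snd p) x)"
    using iter_partial_mult_repr[OF assms] by blast
  show "iter_partial (\<lambda>x. F x * G x) is differentiable at x"
    unfolding L by (rule diff_sum_list) (use assms smooth_diff in blast)
qed

lemma cc_smooth: "f \<in> Cc_inf \<Longrightarrow> smooth f"
  by (simp add: Cc_inf_def)

lemma cc_compact: "f \<in> Cc_inf \<Longrightarrow> compact (closure {x. f x \<noteq> 0})"
  by (simp add: Cc_inf_def)

lemma cc_mult_rpf:
  fixes f :: "real^'n \<Rightarrow> real"
  assumes "f \<in> Cc_inf" "real_polynomial_function R"
  shows "(\<lambda>x. f x * R x) \<in> Cc_inf"
proof -
  have sm: "smooth (\<lambda>x. f x * R x)"
    using smooth_mult[OF cc_smooth[OF assms(1)] rpf_smooth[OF assms(2)]] .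
  have "closure {x. f x * R x \<noteq> 0} \<subseteq> closure {x. f x \<noteq> 0}"
    by (rule closure_mono) auto
  then have "closure {x. f x * R x \<noteq> 0} \<inter> closure {x. f x \<noteq> 0} = closure {x. f x * R x \<noteq> 0}"
    by (rule inf.absorb1)
  moreover have "compact (closure {x. f x * R x \<noteq> 0} \<inter> closure {x. f x \<noteq> 0})"
    using closed_Int_compact[OF closed_closure cc_compact[OF assms(1)]] .
  ultimately have "compact (closure {x. f x * R x \<noteq> 0})" by simp
  with sm show ?thesis by (simp add: Cc_inf_def)
qed

lemma cc_iter_zero0:
  fixes f :: "real^'n \<Rightarrow> real"
  assumes "x \<notin> closure {x. f x \<noteq> 0}"
  shows "f x = 0"
proof -
  have "{x. f x \<noteq> 0} \<subseteq> closure {x. f x \<noteq> 0}" by (rule closure_subset)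
  with assms show ?thesis by blast
qed

lemma partial_zero_open:
  fixes g :: "real^'n \<Rightarrow> real"
  assumes "open U" "x \<in> U" "\<forall>y\<in>U. g y = 0"
  shows "partial g i x = 0"
proof -
  have "(g has_derivative (\<lambda>_. 0)) (at x)"
    by (rule has_derivative_transform_within_open[of "\<lambda>_. 0" _ x UNIV U]) (use assms in auto)
  then show ?thesis by (simp add: partial_eq)
qed

lemma cc_iter_zero:
  fixes f :: "real^'n \<Rightarrow> real"
  shows "x \<notin> closure {x. f x \<noteq> 0} \<Longrightarrow> iter_partial f is x = 0"
proof (induction "is" arbitrary: x)
  case Nil
  then show ?case using cc_iter_zero0 by simp
next
  case (Cons i "is")
  have "partial (iter_partial f is) i x = 0"
  proof (rule partial_zero_open)
    show "open (- closure {x. f x \<noteq> 0})" by (rule open_Compl) simp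
    show "x \<in> - closure {x. f x \<noteq> 0}" using Cons.prems by simp
    show "\<forall>y\<in>- closure {x. f x \<noteq> 0}. iter_partial f is y = 0"
      using Cons.IH by simp
  qed
  then show ?case by simp
qed

lemma cc_iter_cont:
  fixes f :: "real^'n \<Rightarrow> real"
  assumes "f \<in> Cc_inf"
  shows "continuous_on UNIV (iter_partial f is)"
  using smooth_diff[OF cc_smooth[OF assms]]
  by (simp add: continuous_at_imp_continuous_on differentiable_imp_continuous_within)

lemma cc_iter_bounded:
  fixes f :: "real^'n \<Rightarrow> real"
  assumes "f \<in> Cc_inf"
  shows "\<exists>M. \<forall>x. \<bar>iter_partial f is x\<bar> \<le> M"
proof -
  let ?K = "closure {x. f x \<noteq> 0}"
  have "compact (iter_partial f is ` ?K)"
    using compact_continuous_image[OF continuous_on_subset[OF cc_iter_cont[OF assms]] cc_compact[OF assms]]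
    by blast
  then obtain M where M: "\<forall>y\<in>iter_partial f is ` ?K. norm y \<le> M"
    using compact_imp_bounded bounded_iff by metis
  show ?thesis
  proof (intro exI[of _ "max M 0"] allI)
    fix x show "\<bar>iter_partial f is x\<bar> \<le> max M 0"
    proof (cases "x \<in> ?K")
      case True
      then have "norm (iter_partial f is x) \<le> M" using M by blast
      then show ?thesis by simp
    next
      case False
      then show ?thesis using cc_iter_zero[of x f "is"] by simp
    qed
  qed
qed

definition upd :: "real^'n \<Rightarrow> 'n \<Rightarrow> real \<Rightarrow> real^'n" where
  "upd x i s = (\<chi> j. if j = i then s else x $ j)"

lemma upd_upd[simp]: "upd (upd x i s) i t = upd x i t"
  by (simp add: upd_def vec_eq_iff)

lemma line_upd: "x + t *\<^sub>R axis i 1 = upd x i (x $ i + t)"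
  by (simp add: upd_def vec_eq_iff axis_def)

lemma upd_split: "x = upd x i 0 + (x $ i) *\<^sub>R axis i 1"
  by (simp add: upd_def vec_eq_iff axis_def)

lemma bl_upd0: "bounded_linear (\<lambda>x::real^'n. upd x i 0)"
  unfolding linear_conv_bounded_linear[symmetric]
  by (rule linearI) (simp_all add: upd_def vec_eq_iff)

lemma sum_ext_zero:
  fixes c :: "nat \<Rightarrow> real"
  assumes "\<forall>k>N. c k = 0" "N \<le> M"
  shows "(\<Sum>k\<le>N. c k * t^k) = (\<Sum>k\<le>M. c k * t^k)"
  by (rule sum.mono_neutral_left) (use assms in auto)

definition poly_rep :: "'n \<Rightarrow> (real^'n \<Rightarrow> real) \<Rightarrow> nat \<Rightarrow> (nat \<Rightarrow> real^'n \<Rightarrow> real) \<Rightarrow> bool" where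
  "poly_rep i Q N c \<longleftrightarrow> (\<forall>k. real_polynomial_function (c k)) \<and> (\<forall>k x s. c k (upd x i s) = c k x)
     \<and> (\<forall>k>N. \<forall>x. c k x = 0) \<and> (\<forall>x. Q x = (\<Sum>k\<le>N. c k x * (x$i)^k))"

lemma rpf_rep:
  fixes Q :: "real^'n \<Rightarrow> real"
  assumes "real_polynomial_function Q"
  shows "\<exists>N c. poly_rep i Q N c"
  using assms
proof (induction Q)
  case (linear L)
  define c where "c = (\<lambda>(k::nat) (x::real^'n). if k = 0 then L (upd x i 0) else if k = 1 then L (axis i 1) else 0)"
  have "real_polynomial_function (c k)" for k
  proof -
    have "real_polynomial_function (\<lambda>x. L (upd x i 0))"
      using bounded_linear_compose[OF linear bl_upd0] by (auto intro: real_polynomial_function.intros(1))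
    then show ?thesis unfolding c_def
      by (cases "k = 0") (simp_all add: real_polynomial_function.intros(2))
  qed
  moreover have "L x = (\<Sum>k::nat\<le>1. c k x * (x$i)^k)" for x
  proof -
    interpret bounded_linear L by (rule linear)
    have "L x = L (upd x i 0 + (x $ i) *\<^sub>R axis i 1)" using upd_split[of x i] by simp
    also have "\<dots> = L (upd x i 0) + x$i * L (axis i 1)"
      by (simp only: add scaleR real_scaleR_def)
    finally show ?thesis by (simp add: c_def)
  qed
  ultimately show ?case unfolding poly_rep_def
  proof (intro exI[of _ 1] exI[of _ c] conjI allI impI)
    fix k x s show "c k (upd x i s) = c k x" by (simp add: c_def)
  next
    fix k :: nat and x assume "k > 1" then show "c k x = 0" by (simp add: c_def)
  qed auto
next
  case (const a)
  show ?case unfolding poly_rep_def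
    by (intro exI[of _ 0] exI[of _ "\<lambda>k x. if k = 0 then a else 0"]) auto
next
  case (add f g)
  then obtain N1 c1 N2 c2 where r1: "poly_rep i f N1 c1" and r2: "poly_rep i g N2 c2" by blast
  define N where "N = max N1 N2"
  have "f x + g x = (\<Sum>k\<le>N. (c1 k x + c2 k x) * (x$i)^k)" for x
  proof -
    have "f x = (\<Sum>k\<le>N. c1 k x * (x$i)^k)"
      using r1 sum_ext_zero[of N1 "\<lambda>k. c1 k x" N] unfolding poly_rep_def N_def by auto
    moreover have "g x = (\<Sum>k\<le>N. c2 k x * (x$i)^k)"
      using r2 sum_ext_zero[of N2 "\<lambda>k. c2 k x" N] unfolding poly_rep_def N_def by auto
    ultimately show ?thesis by (simp add: sum.distrib distrib_right)
  qed
  then show ?case using r1 r2 unfolding poly_rep_def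
    by (intro exI[of _ N] exI[of _ "\<lambda>k x. c1 k x + c2 k x"]) (auto simp: N_def)
next
  case (mult f g)
  then obtain N1 c1 N2 c2 where r1: "poly_rep i f N1 c1" and r2: "poly_rep i g N2 c2" by blast
  define c where "c = (\<lambda>r x. \<Sum>k\<le>r. c1 k x * c2 (r - k) x)"
  have "f x * g x = (\<Sum>r\<le>N1 + N2. c r x * (x$i)^r)" for x
    using r1 r2 polynomial_product[of N1 "\<lambda>k. c1 k x" N2 "\<lambda>k. c2 k x" "x$i"]
    unfolding poly_rep_def c_def by auto
  moreover have "\<forall>r>N1+N2. \<forall>x. c r x = 0"
  proof (intro allI impI)
    fix r x assume r: "r > N1 + N2"
    have "c1 k x * c2 (r - k) x = 0" if "k \<le> r" for k
    proof (cases "k > N1")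
      case True then show ?thesis using r1 unfolding poly_rep_def by auto
    next
      case False then have "r - k > N2" using r that by linarith
      then show ?thesis using r2 unfolding poly_rep_def by auto
    qed
    note z = this
    show "c r x = 0" unfolding c_def by (rule sum.neutral) (use z in simp)
  qed
  moreover have "real_polynomial_function (c r)" for r
    using r1 r2 unfolding poly_rep_def c_def
    by (intro real_polynomial_function_sum) (auto intro: real_polynomial_function.intros(4))
  moreover have "c r (upd x i s) = c r x" for r x s
    using r1 r2 unfolding poly_rep_def c_def by simp
  ultimately show ?case unfolding poly_rep_def
    by (intro exI[of _ "N1+N2"] exI[of _ c]) auto
qed

lemma rpf_antideriv:
  fixes Q :: "real^'n \<Rightarrow> real"
  assumes "real_polynomial_function Q"
  shows "\<exists>R. real_polynomial_function R \<and> (\<forall>x. partial R i x = Q x)"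
proof -
  obtain N c where r: "poly_rep i Q N c" using rpf_rep[OF assms] by blast
  define R where "R = (\<lambda>x::real^'n. \<Sum>k\<le>N. c k x * (x$i)^(Suc k) / real (Suc k))"
  have rk: "real_polynomial_function (\<lambda>x::real^'n. c k x * (x$i)^(Suc k) / real (Suc k))" for k
  proof -
    have "real_polynomial_function (\<lambda>x::real^'n. x$i)"
      by (rule real_polynomial_function.intros(1)) (rule bounded_linear_vec_nth)
    then have "real_polynomial_function (\<lambda>x::real^'n. (x$i)^(Suc k))"
      by (rule real_polynomial_function_power)
    then have "real_polynomial_function (\<lambda>x::real^'n. c k x * (x$i)^(Suc k))"
      using r unfolding poly_rep_def by (intro real_polynomial_function.intros(4)) auto
    then show ?thesis by (rule real_polynomial_function_divide)
  qed
  have rR: "real_polynomial_function R"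
    unfolding R_def by (intro real_polynomial_function_sum rk) auto
  have "partial R i x = Q x" for x
  proof (rule partial_line_unique)
    show "R differentiable at x" using rR by (rule differentiable_at_real_polynomial_function)
    have eq: "(\<lambda>t. R (x + t *\<^sub>R axis i 1)) = (\<lambda>t. \<Sum>k\<le>N. c k x * (x$i + t)^(Suc k) / real (Suc k))"
      using r unfolding R_def poly_rep_def line_upd by (simp add: upd_def)
    have "((\<lambda>t. \<Sum>k\<le>N. c k x * (x$i + t)^(Suc k) / real (Suc k)) has_real_derivative
            (\<Sum>k\<le>N. c k x * (x$i)^k)) (at 0)"
    proof (rule DERIV_sum)
      fix k assume "k \<in> {..N}"
      have d1: "((\<lambda>t. x$i + t) has_real_derivative 1) (at 0)"
        by (auto intro!: derivative_eq_intros)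
      have "((\<lambda>t. c k x * (x$i + t)^(Suc k) / real (Suc k)) has_real_derivative
          c k x * (of_nat (Suc k) * (1 * (x$i + 0) ^ (Suc k - Suc 0))) / real (Suc k)) (at 0)"
        by (intro DERIV_cdivide DERIV_cmult DERIV_power d1)
      then show "((\<lambda>t. c k x * (x$i + t)^(Suc k) / real (Suc k)) has_real_derivative c k x * (x$i)^k) (at 0)"
        by simp
    qed
    then show "((\<lambda>t. R (x + t *\<^sub>R axis i 1)) has_real_derivative Q x) (at 0)"
      using r unfolding eq poly_rep_def by simp
  qed
  with rR show ?thesis by blast
qed

lemma partial_diff:
  assumes "f differentiable (at x)" "g differentiable (at x)"
  shows "partial (\<lambda>x. f x - g x) i x = partial f i x - partial g i x"
  by (rule partial_line_unique) (use assms partial_line in \<open>auto intro!: derivative_eq_intros\<close>)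

lemma partial_const_line:
  assumes "g differentiable (at x)" "\<forall>t. g (x + t *\<^sub>R axis i 1) = g x"
  shows "partial g i x = 0"
  by (rule partial_line_unique[OF assms(1)]) (simp add: assms(2))

lemma upd_nth[simp]: "upd x i s $ i = s" "j \<noteq> i \<Longrightarrow> upd x i s $ j = x $ j"
  by (auto simp: upd_def)

lemma upd_self[simp]: "upd x i (x $ i) = x"
  by (simp add: upd_def vec_eq_iff)

lemma line_deriv_at:
  fixes F :: "real^'n \<Rightarrow> real"
  assumes "F differentiable (at (upd x i t))"
  shows "((\<lambda>t. F (upd x i t)) has_real_derivative partial F i (upd x i t)) (at t)"
proof -
  have "((\<lambda>s. F (upd x i t + s *\<^sub>R axis i 1)) has_real_derivative partial F i (upd x i t)) (at 0)"
    by (rule partial_line[OF assms])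
  moreover have "(\<lambda>s. F (upd x i t + s *\<^sub>R axis i 1)) = (\<lambda>s. F (upd x i (s + t)))"
    by (rule ext) (simp add: line_upd add.commute)
  ultimately show ?thesis using DERIV_shift[of "\<lambda>t. F (upd x i t)" _ 0 t] by simp
qed

lemma pf_upd: "polynomial_function (\<lambda>x::real^'n. upd x i s)"
proof -
  have "(\<lambda>x::real^'n. upd x i s) = (\<lambda>x. upd x i 0 + s *\<^sub>R axis i 1)"
    by (rule ext) (simp add: upd_def vec_eq_iff axis_def)
  moreover have "polynomial_function (\<lambda>x::real^'n. upd x i 0 + s *\<^sub>R axis i 1)"
    by (intro polynomial_function_add polynomial_function_bounded_linear bl_upd0 polynomial_function_const)
  ultimately show ?thesis by simp
qed

lemma rpf_upd: "real_polynomial_function g \<Longrightarrow> real_polynomial_function (\<lambda>x::real^'n. g (upd x i s))"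
  using real_polynomial_function_compose[OF pf_upd] by (simp add: o_def)

lemma approx_C1:
  fixes \<psi> :: "real^'n \<Rightarrow> real"
  assumes diff: "\<forall>x. \<psi> differentiable (at x)" and cont: "continuous_on UNIV (partial \<psi> i)"
    and K: "compact K" and e: "e > 0"
  shows "\<exists>R. real_polynomial_function R \<and>
    (\<forall>x\<in>K. \<bar>R x - \<psi> x\<bar> \<le> e \<and> \<bar>partial R i x - partial \<psi> i x\<bar> \<le> e)"
proof -
  obtain r0 where r0: "\<forall>x\<in>K. norm x \<le> r0"
    using compact_imp_bounded[OF K] bounded_iff by blast
  define r where "r = max r0 1"
  have r: "r > 0" "\<forall>x\<in>K. norm x \<le> r" using r0 by (auto simp: r_def)
  define B where "B = cbox (- (\<chi> j. r)) ((\<chi> j. r) :: real^'n)"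
  have B: "x \<in> B \<longleftrightarrow> (\<forall>j. \<bar>x$j\<bar> \<le> r)" for x
    unfolding B_def mem_box_cart by (simp add: abs_le_iff minus_le_iff conj_commute)
  have KB: "K \<subseteq> B"
    using r(2) B norm_bound_component_le_cart by blast
  have cB: "compact B" unfolding B_def by simp
  define \<delta> where "\<delta> = e / (2 * r + 1)"
  have d: "\<delta> > 0" using e r by (simp add: \<delta>_def)
  have contpsi: "continuous_on B \<psi>"
    using diff by (meson continuous_at_imp_continuous_on differentiable_imp_continuous_within)
  obtain Q where Q: "real_polynomial_function Q" "\<And>x. x \<in> B \<Longrightarrow> \<bar>partial \<psi> i x - Q x\<bar> < \<delta>"
    using Stone_Weierstrass_real_polynomial_function[OF cB continuous_on_subset[OF cont] d] by blast
  obtain P where P: "real_polynomial_function P" "\<And>x. x \<in> B \<Longrightarrow> \<bar>\<psi> x - P x\<bar> < \<delta>"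
    using Stone_Weierstrass_real_polynomial_function[OF cB contpsi d] by blast
  obtain R0 where R0: "real_polynomial_function R0" "\<And>x. partial R0 i x = Q x"
    using rpf_antideriv[OF Q(1)] by blast
  define H where "H = (\<lambda>x. P (upd x i (-r)) - R0 (upd x i (-r)))"
  define R where "R = (\<lambda>x. R0 x + H x)"
  have rH: "real_polynomial_function H"
    unfolding H_def by (intro real_polynomial_function_diff rpf_upd P(1) R0(1))
  have rR: "real_polynomial_function R"
    unfolding R_def by (intro real_polynomial_function.intros(3) rH R0(1))
  have dR0: "R0 differentiable (at x)" for x using R0(1) differentiable_at_real_polynomial_function by blast
  have dH: "H differentiable (at x)" for x using rH differentiable_at_real_polynomial_function by blast
  have pH: "partial H i x = 0" for x
    by (rule partial_const_line[OF dH]) (simp add: H_def line_upd)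
  have pR: "partial R i x = Q x" for x
    unfolding R_def using partial_add[OF dR0 dH] pH R0(2) by simp
  have bound: "\<bar>R x - \<psi> x\<bar> \<le> e" if xB: "x \<in> B" for x
  proof -
    define y where "y = upd x i (-r)"
    have xall: "\<bar>x$j\<bar> \<le> r" for j using xB unfolding B by blast
    have xi: "-r \<le> x$i" "x$i \<le> r" using xall[of i] by (simp_all add: abs_le_iff)
    have updB: "upd x i s \<in> B" if "\<bar>s\<bar> \<le> r" for s
      unfolding B
    proof
      fix j show "\<bar>upd x i s $ j\<bar> \<le> r" using that xall[of j] by (cases "j = i") simp_all
    qed
    have yB: "y \<in> B" unfolding y_def using r by (intro updB) simp
    define g where "g = (\<lambda>t. R0 (upd x i t) - \<psi> (upd x i t))"
    have g1: "\<bar>g (x$i) - g (-r)\<bar> \<le> 2 * r * \<delta>"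
    proof (cases "-r < x$i")
      case True
      have dg: "(g has_real_derivative (Q (upd x i t) - partial \<psi> i (upd x i t))) (at t)" for t
      proof -
        have "((\<lambda>t. (\<lambda>z. R0 z - \<psi> z) (upd x i t)) has_real_derivative
              partial (\<lambda>z. R0 z - \<psi> z) i (upd x i t)) (at t)"
          by (rule line_deriv_at) (use dR0 diff in auto)
        moreover have "partial (\<lambda>z. R0 z - \<psi> z) i (upd x i t) = Q (upd x i t) - partial \<psi> i (upd x i t)"
          using partial_diff[OF dR0 diff[rule_format]] R0(2) by simp
        ultimately show ?thesis unfolding g_def by simp
      qed
      have "continuous_on {-r..x$i} g"
        using dg by (meson DERIV_continuous continuous_at_imp_continuous_on)
      moreover have "g differentiable (at t)" for t using dg real_differentiable_def by blast
      ultimately obtain l z where z: "-r < z" "z < x$i" "DERIV g z :> l" "g (x$i) - g (-r) = (x$i - -r) * l"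
        using MVT[OF True] by blast
      have l: "l = Q (upd x i z) - partial \<psi> i (upd x i z)" using DERIV_unique[OF z(3) dg] .
      have "upd x i z \<in> B"
        using xi z by (intro updB) (simp add: abs_le_iff)
      then have "\<bar>l\<bar> \<le> \<delta>" using Q(2) l by fastforce
      moreover have "\<bar>x$i - -r\<bar> \<le> 2 * r" using xi by (simp add: abs_le_iff)
      ultimately have "\<bar>(x$i - -r) * l\<bar> \<le> 2 * r * \<delta>"
        by (simp add: abs_mult mult_mono r(1) less_imp_le)
      then show ?thesis using z(4) by simp
    next
      case False
      then have "x$i = -r" using xi by simp
      then show ?thesis using r d by simp
    qed
    have "R x - \<psi> x = (g (x$i) - g (-r)) + (P y - \<psi> y)"
      unfolding R_def H_def g_def y_def by simp
    then have "\<bar>R x - \<psi> x\<bar> \<le> 2 * r * \<delta> + \<delta>"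
      using g1 P(2)[OF yB] by linarith
    also have "\<dots> = (2 * r + 1) * \<delta>" by (simp add: algebra_simps)
    also have "\<dots> = e" using r(1) unfolding \<delta>_def by simp
    finally show ?thesis .
  qed
  show ?thesis
  proof (intro exI[of _ R] conjI rR ballI)
    fix x assume "x \<in> K"
    then have xB: "x \<in> B" using KB by blast
    show "\<bar>R x - \<psi> x\<bar> \<le> e" using bound[OF xB] .
    have "\<bar>partial R i x - partial \<psi> i x\<bar> < \<delta>" using Q(2)[OF xB] pR by simp
    moreover have "\<delta> \<le> e" using e r by (simp add: \<delta>_def field_simps)
    ultimately show "\<bar>partial R i x - partial \<psi> i x\<bar> \<le> e" by simp
  qed
qed

lemma cont_meas:
  fixes g :: "real^'n \<Rightarrow> real"
  assumes "sets \<mu> = sets borel" "continuous_on UNIV g"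
  shows "g \<in> borel_measurable \<mu>"
  by (subst measurable_cong_sets[OF assms(1) refl]) (rule borel_measurable_continuous_onI[OF assms(2)])

lemma Lp_meas: "\<phi> \<in> Lp \<mu> p \<Longrightarrow> \<phi> \<in> borel_measurable \<mu>"
  by (simp add: Lp_def)

lemma Lp_fin: "\<phi> \<in> Lp \<mu> p \<Longrightarrow> (\<integral>\<^sup>+ x. ennreal (\<bar>\<phi> x\<bar> powr p) \<partial>\<mu>) < \<infinity>"
  by (simp add: Lp_def)

lemma pow_bound1: "(a::real) \<ge> 0 \<Longrightarrow> p \<ge> 1 \<Longrightarrow> a \<le> 1 + a powr p"
proof (cases "a \<le> 1")
  case True
  then show ?thesis by (smt (verit) powr_ge_zero)
next
  case False
  assume p: "p \<ge> 1"
  have "a = a powr 1" using False by simp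
  also have "\<dots> \<le> a powr p" using False p by (intro powr_mono) auto
  finally show ?thesis by simp
qed

lemma Lp_integrable:
  assumes "prob_space \<mu>" "p \<ge> 1" "\<phi> \<in> Lp \<mu> p"
  shows "integrable \<mu> \<phi>"
proof (rule integrableI_bounded)
  show m: "\<phi> \<in> borel_measurable \<mu>" using assms(3) by (rule Lp_meas)
  have "(\<integral>\<^sup>+ x. ennreal (norm (\<phi> x)) \<partial>\<mu>) \<le> (\<integral>\<^sup>+ x. ennreal 1 + ennreal (\<bar>\<phi> x\<bar> powr p) \<partial>\<mu>)"
  proof (intro nn_integral_mono)
    fix x
    have "\<bar>\<phi> x\<bar> \<le> 1 + \<bar>\<phi> x\<bar> powr p" using pow_bound1 assms(2) by simp
    then have "ennreal \<bar>\<phi> x\<bar> \<le> ennreal (1 + \<bar>\<phi> x\<bar> powr p)" by (rule ennreal_leI)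
    then show "ennreal (norm (\<phi> x)) \<le> ennreal 1 + ennreal (\<bar>\<phi> x\<bar> powr p)"
      by (simp add: ennreal_plus)
  qed
  also have "\<dots> = (\<integral>\<^sup>+ x. ennreal 1 \<partial>\<mu>) + (\<integral>\<^sup>+ x. ennreal (\<bar>\<phi> x\<bar> powr p) \<partial>\<mu>)"
    using m by (intro nn_integral_add) auto
  also have "\<dots> < \<infinity>"
    using Lp_fin[OF assms(3)] prob_space.emeasure_space_1[OF assms(1)] by simp
  finally show "(\<integral>\<^sup>+ x. ennreal (norm (\<phi> x)) \<partial>\<mu>) < \<infinity>" .
qed

lemma Lp_mult_bounded:
  assumes "\<phi> \<in> Lp \<mu> p" "g \<in> borel_measurable \<mu>" "\<forall>x. \<bar>g x\<bar> \<le> C" "p \<ge> 1"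
  shows "(\<lambda>x. g x * \<phi> x) \<in> Lp \<mu> p"
  unfolding Lp_def
proof (intro CollectI conjI)
  show "(\<lambda>x. g x * \<phi> x) \<in> borel_measurable \<mu>" using assms Lp_meas by measurable
  have C: "C \<ge> 0" using assms(3) by (meson abs_ge_zero order_trans)
  have "(\<integral>\<^sup>+ x. ennreal (\<bar>g x * \<phi> x\<bar> powr p) \<partial>\<mu>) \<le> (\<integral>\<^sup>+ x. ennreal (C powr p) * ennreal (\<bar>\<phi> x\<bar> powr p) \<partial>\<mu>)"
  proof (intro nn_integral_mono)
    fix x
    have "\<bar>g x * \<phi> x\<bar> powr p \<le> (C * \<bar>\<phi> x\<bar>) powr p"
      using assms(3,4) by (intro powr_mono2) (auto simp: abs_mult mult_right_mono)
    also have "\<dots> = C powr p * \<bar>\<phi> x\<bar> powr p" using C by (simp add: powr_mult)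
    finally have "ennreal (\<bar>g x * \<phi> x\<bar> powr p) \<le> ennreal (C powr p * \<bar>\<phi> x\<bar> powr p)"
      by (rule ennreal_leI)
    then show "ennreal (\<bar>g x * \<phi> x\<bar> powr p) \<le> ennreal (C powr p) * ennreal (\<bar>\<phi> x\<bar> powr p)"
      by (simp only: ennreal_mult'[OF powr_ge_zero])
  qed
  also have "\<dots> = ennreal (C powr p) * (\<integral>\<^sup>+ x. ennreal (\<bar>\<phi> x\<bar> powr p) \<partial>\<mu>)"
    using Lp_meas[OF assms(1)] by (intro nn_integral_cmult) auto
  also have "\<dots> < \<infinity>" using Lp_fin[OF assms(1)] by (simp add: ennreal_mult_less_top)
  finally show "(\<integral>\<^sup>+ x. ennreal (\<bar>g x * \<phi> x\<bar> powr p) \<partial>\<mu>) < \<infinity>" .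
qed

lemma powr_add_bound:
  fixes a b p :: real assumes p: "p \<ge> 1"
  shows "\<bar>a + b\<bar> powr p \<le> 2 powr p * (\<bar>a\<bar> powr p + \<bar>b\<bar> powr p)"
proof -
  define m where "m = max \<bar>a\<bar> \<bar>b\<bar>"
  have m0: "m \<ge> 0" by (simp add: m_def)
  have "\<bar>a + b\<bar> \<le> 2 * m" unfolding m_def by linarith
  then have "\<bar>a + b\<bar> powr p \<le> (2 * m) powr p"
    using p by (intro powr_mono2) auto
  also have "\<dots> = 2 powr p * m powr p" using m0 by (simp add: powr_mult)
  also have "m powr p \<le> \<bar>a\<bar> powr p + \<bar>b\<bar> powr p"
  proof (cases "\<bar>a\<bar> \<le> \<bar>b\<bar>")
    case True then have "m = \<bar>b\<bar>" by (simp add: m_def)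
    then show ?thesis by (simp add: add_increasing)
  next
    case False then have "m = \<bar>a\<bar>" by (simp add: m_def)
    then show ?thesis by (simp add: add_increasing2)
  qed
  then have "2 powr p * m powr p \<le> 2 powr p * (\<bar>a\<bar> powr p + \<bar>b\<bar> powr p)"
    by (intro mult_left_mono) auto
  finally show ?thesis .
qed

lemma Lp_add:
  assumes "\<phi> \<in> Lp \<mu> p" "\<theta> \<in> Lp \<mu> p" "p \<ge> 1"
  shows "(\<lambda>x. \<phi> x + \<theta> x) \<in> Lp \<mu> p"
  unfolding Lp_def
proof (intro CollectI conjI)
  show "(\<lambda>x. \<phi> x + \<theta> x) \<in> borel_measurable \<mu>" using assms Lp_meas by measurable
  have "(\<integral>\<^sup>+ x. ennreal (\<bar>\<phi> x + \<theta> x\<bar> powr p) \<partial>\<mu>) \<le>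
      (\<integral>\<^sup>+ x. ennreal (2 powr p) * (ennreal (\<bar>\<phi> x\<bar> powr p) + ennreal (\<bar>\<theta> x\<bar> powr p)) \<partial>\<mu>)"
  proof (intro nn_integral_mono)
    fix x
    have "ennreal (\<bar>\<phi> x + \<theta> x\<bar> powr p) \<le> ennreal (2 powr p * (\<bar>\<phi> x\<bar> powr p + \<bar>\<theta> x\<bar> powr p))"
      using powr_add_bound[OF assms(3), of "\<phi> x" "\<theta> x"] by (rule ennreal_leI)
    also have "\<dots> = ennreal (2 powr p) * (ennreal (\<bar>\<phi> x\<bar> powr p) + ennreal (\<bar>\<theta> x\<bar> powr p))"
      by (simp only: ennreal_mult'[OF powr_ge_zero] ennreal_plus[OF powr_ge_zero powr_ge_zero])
    finally show "ennreal (\<bar>\<phi> x + \<theta> x\<bar> powr p) \<le> ennreal (2 powr p) * (ennreal (\<bar>\<phi> x\<bar> powr p) + ennreal (\<bar>\<theta> x\<bar> powr p))" .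
  qed
  also have "\<dots> = ennreal (2 powr p) * ((\<integral>\<^sup>+ x. ennreal (\<bar>\<phi> x\<bar> powr p) \<partial>\<mu>) + (\<integral>\<^sup>+ x. ennreal (\<bar>\<theta> x\<bar> powr p) \<partial>\<mu>))"
    using Lp_meas[OF assms(1)] Lp_meas[OF assms(2)] by (simp add: nn_integral_cmult nn_integral_add)
  also have "\<dots> < \<infinity>" using Lp_fin[OF assms(1)] Lp_fin[OF assms(2)] by (simp add: ennreal_mult_less_top)
  finally show "(\<integral>\<^sup>+ x. ennreal (\<bar>\<phi> x + \<theta> x\<bar> powr p) \<partial>\<mu>) < \<infinity>" .
qed

lemma Lp_zero: "(\<lambda>x. 0) \<in> Lp \<mu> p"
  by (simp add: Lp_def)

lemma Lp_sum:
  assumes "finite A" "\<And>j. j \<in> A \<Longrightarrow> f j \<in> Lp \<mu> p" "p \<ge> 1"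
  shows "(\<lambda>x. \<Sum>j\<in>A. f j x) \<in> Lp \<mu> p"
  using assms by (induction A rule: finite_induct) (auto simp: Lp_zero intro!: Lp_add)

lemma integrable_mult_bounded:
  fixes \<phi> :: "'a \<Rightarrow> real"
  assumes "integrable \<mu> \<phi>" "g \<in> borel_measurable \<mu>" "\<forall>x. \<bar>g x\<bar> \<le> C"
  shows "integrable \<mu> (\<lambda>x. g x * \<phi> x)"
proof (rule Bochner_Integration.integrable_bound)
  show "integrable \<mu> (\<lambda>x. C * \<phi> x)" using assms(1) by simp
  show "(\<lambda>x. g x * \<phi> x) \<in> borel_measurable \<mu>" using assms by measurable
  have C: "C \<ge> 0" using assms(3) by (meson abs_ge_zero order_trans)
  show "AE x in \<mu>. norm (g x * \<phi> x) \<le> norm (C * \<phi> x)"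
    using assms(3) C by (auto simp: abs_mult intro!: mult_right_mono)
qed

definition BC :: "(real^'n \<Rightarrow> real) \<Rightarrow> bool" where
  "BC g \<longleftrightarrow> continuous_on UNIV g \<and> (\<exists>C. \<forall>x. \<bar>g x\<bar> \<le> C)"

lemma bc_mult: "BC f \<Longrightarrow> BC g \<Longrightarrow> BC (\<lambda>x. f x * g x)"
  unfolding BC_def
proof (elim conjE exE, intro conjI)
  fix C D assume "continuous_on UNIV f" "\<forall>x. \<bar>f x\<bar> \<le> C" "continuous_on UNIV g" "\<forall>x. \<bar>g x\<bar> \<le> D"
  then show "continuous_on UNIV (\<lambda>x. f x * g x)" by (auto intro: continuous_intros)
  have "\<bar>f x * g x\<bar> \<le> C * D" for x
    unfolding abs_mult using \<open>\<forall>x. \<bar>f x\<bar> \<le> C\<close> \<open>\<forall>x. \<bar>g x\<bar> \<le> D\<close>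
    by (intro mult_mono) (auto intro: order_trans[OF abs_ge_zero])
  then show "\<exists>C. \<forall>x. \<bar>f x * g x\<bar> \<le> C" by blast
qed

lemma bc_add: "BC f \<Longrightarrow> BC g \<Longrightarrow> BC (\<lambda>x. f x + g x)"
  unfolding BC_def
proof (elim conjE exE, intro conjI)
  fix C D assume "continuous_on UNIV f" "\<forall>x. \<bar>f x\<bar> \<le> C" "continuous_on UNIV g" "\<forall>x. \<bar>g x\<bar> \<le> D"
  then show "continuous_on UNIV (\<lambda>x. f x + g x)" by (auto intro: continuous_intros)
  have "\<bar>f x + g x\<bar> \<le> C + D" for x
    using \<open>\<forall>x. \<bar>f x\<bar> \<le> C\<close> \<open>\<forall>x. \<bar>g x\<bar> \<le> D\<close> abs_triangle_ineq[of "f x" "g x"]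
    by (meson add_mono order_trans)
  then show "\<exists>C. \<forall>x. \<bar>f x + g x\<bar> \<le> C" by blast
qed

lemma bc_minus: "BC f \<Longrightarrow> BC (\<lambda>x. - f x)"
  unfolding BC_def by (auto intro: continuous_intros)

lemma bc_diff: "BC f \<Longrightarrow> BC g \<Longrightarrow> BC (\<lambda>x. f x - g x)"
  using bc_add[of f "\<lambda>x. - g x"] bc_minus[of g] by simp

lemma bc_const: "BC (\<lambda>x. c)"
  unfolding BC_def by auto

lemma C1b_diff: "\<psi> \<in> C1b \<Longrightarrow> \<psi> differentiable (at x)"
  by (simp add: C1b_def)

lemma C1b_cont: "\<psi> \<in> C1b \<Longrightarrow> continuous_on UNIV \<psi>"
  using C1b_diff by (meson continuous_at_imp_continuous_on differentiable_imp_continuous_within)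

lemma bounded_range_abs: "bounded (range g) \<Longrightarrow> \<exists>C. \<forall>x. \<bar>(g x :: real)\<bar> \<le> C"
  unfolding bounded_iff by auto

lemma bc_C1b: "\<psi> \<in> C1b \<Longrightarrow> BC \<psi>"
  unfolding BC_def using C1b_cont bounded_range_abs by (auto simp: C1b_def)

lemma bc_C1b_partial: "\<psi> \<in> C1b \<Longrightarrow> BC (partial \<psi> i)"
  unfolding BC_def using bounded_range_abs[of "partial \<psi> i"] by (auto simp: C1b_def)

lemma bc_cc: "f \<in> Cc_inf \<Longrightarrow> BC (iter_partial f is)"
  unfolding BC_def using cc_iter_cont cc_iter_bounded by blast

lemma bc_cc_mult:
  fixes f g :: "real^'n \<Rightarrow> real"
  assumes f: "f \<in> Cc_inf" and g: "continuous_on UNIV g"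
  shows "BC (\<lambda>x. iter_partial f is x * g x)"
  unfolding BC_def
proof (intro conjI)
  show "continuous_on UNIV (\<lambda>x. iter_partial f is x * g x)"
    using cc_iter_cont[OF f] g by (auto intro: continuous_intros)
  let ?K = "closure {x. f x \<noteq> 0}"
  obtain M where M: "\<forall>x. \<bar>iter_partial f is x\<bar> \<le> M" using cc_iter_bounded[OF f] by blast
  have "compact (g ` ?K)"
    using compact_continuous_image[OF continuous_on_subset[OF g] cc_compact[OF f]] by blast
  then obtain D where D: "\<forall>y\<in>g ` ?K. norm y \<le> D"
    using compact_imp_bounded bounded_iff by metis
  have "\<bar>iter_partial f is x * g x\<bar> \<le> M * max D 0" for x
  proof (cases "x \<in> ?K")
    case True
    then have "\<bar>g x\<bar> \<le> max D 0" using D by fastforce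
    then show ?thesis unfolding abs_mult using M by (intro mult_mono) (auto intro: order_trans[OF abs_ge_zero])
  next
    case False
    then have "iter_partial f is x = 0" by (rule cc_iter_zero)
    moreover have "M \<ge> 0" using M by (meson abs_ge_zero order_trans)
    ultimately show ?thesis by simp
  qed
  then show "\<exists>C. \<forall>x. \<bar>iter_partial f is x * g x\<bar> \<le> C" by blast
qed

lemma bc_meas: "sets \<mu> = sets borel \<Longrightarrow> BC g \<Longrightarrow> g \<in> borel_measurable \<mu>"
  unfolding BC_def using cont_meas by blast

lemma bc_integrable:
  assumes "sets \<mu> = sets borel" "BC g" "integrable \<mu> \<phi>"
  shows "integrable \<mu> (\<lambda>x. g x * \<phi> x)"
proof -
  obtain C where "\<forall>x. \<bar>g x\<bar> \<le> C" using assms(2) unfolding BC_def by blast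
  then show ?thesis using integrable_mult_bounded[OF assms(3) bc_meas[OF assms(1,2)]] by blast
qed

lemma bc_Lp:
  assumes "sets \<mu> = sets borel" "BC g" "\<phi> \<in> Lp \<mu> p" "p \<ge> 1"
  shows "(\<lambda>x. g x * \<phi> x) \<in> Lp \<mu> p"
proof -
  obtain C where "\<forall>x. \<bar>g x\<bar> \<le> C" using assms(2) unfolding BC_def by blast
  then show ?thesis using Lp_mult_bounded[OF assms(3) bc_meas[OF assms(1,2)]] assms(4) by blast
qed

lemma small_zero:
  fixes A c :: real
  assumes "c \<ge> 0" "\<And>e. e > 0 \<Longrightarrow> \<bar>A\<bar> \<le> e * c"
  shows "A = 0"
proof (rule ccontr)
  assume "A \<noteq> 0"
  then have "\<bar>A\<bar> > 0" by simp
  define e where "e = \<bar>A\<bar> / (2 * (c + 1))"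
  have "e > 0" using \<open>\<bar>A\<bar> > 0\<close> assms(1) by (simp add: e_def)
  then have "\<bar>A\<bar> \<le> e * c" by (rule assms(2))
  also have "e * c < \<bar>A\<bar>"
    using \<open>\<bar>A\<bar> > 0\<close> assms(1) unfolding e_def by (simp add: field_simps add_nonneg_pos)
  finally show False by simp
qed

lemma rpf_cont: "real_polynomial_function R \<Longrightarrow> continuous_on UNIV R"
  using continuous_real_polymonial_function continuous_at_imp_continuous_on by blast

lemma partA_weak:
  fixes \<mu> :: "(real^'d) measure"
  assumes P: "prob_space \<mu>" and S: "sets \<mu> = sets borel" and p: "p \<ge> 1"
    and wd: "weak_deriv \<mu> p \<phi> i \<theta>" and \<phi>L: "\<phi> \<in> Lp \<mu> p" and \<psi>: "\<psi> \<in> C1b"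
  shows "weak_deriv \<mu> p (\<lambda>x. \<psi> x * \<phi> x) i (\<lambda>x. \<psi> x * \<theta> x + partial \<psi> i x * \<phi> x)"
  unfolding weak_deriv_def
proof (intro conjI ballI)
  have \<theta>L: "\<theta> \<in> Lp \<mu> p" using wd by (simp add: weak_deriv_def)
  show "(\<lambda>x. \<psi> x * \<theta> x + partial \<psi> i x * \<phi> x) \<in> Lp \<mu> p"
    using bc_Lp[OF S bc_C1b[OF \<psi>] \<theta>L p] bc_Lp[OF S bc_C1b_partial[OF \<psi>] \<phi>L p] p
    by (rule Lp_add)
  fix f :: "real^'d \<Rightarrow> real" assume f: "f \<in> Cc_inf"
  have wdf: "\<And>g. g \<in> Cc_inf \<Longrightarrow> (\<integral>x. partial g i x * \<phi> x \<partial>\<mu>) = - (\<integral>x. g x * \<theta> x \<partial>\<mu>)"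
    using wd by (simp add: weak_deriv_def)
  have i\<phi>: "integrable \<mu> \<phi>" using Lp_integrable[OF P p \<phi>L] .
  have i\<theta>: "integrable \<mu> \<theta>" using Lp_integrable[OF P p \<theta>L] .
  define d where "d = partial f i"
  let ?K = "closure {x. f x \<noteq> 0}"
  have bf: "BC f" using bc_cc[OF f, of "[]"] by simp
  have bd: "BC d" using bc_cc[OF f, of "[i]"] by (simp add: d_def)
  obtain M0 where M0: "\<forall>x. \<bar>f x\<bar> \<le> M0" using cc_iter_bounded[OF f, of "[]"] by auto
  obtain M1 where M1: "\<forall>x. \<bar>d x\<bar> \<le> M1" using cc_iter_bounded[OF f, of "[i]"] by (auto simp: d_def)
  have M0p: "M0 \<ge> 0" using M0 by (meson abs_ge_zero order_trans)
  have M1p: "M1 \<ge> 0" using M1 by (meson abs_ge_zero order_trans)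
  have fz: "x \<notin> ?K \<Longrightarrow> f x = 0" for x using cc_iter_zero[of x f "[]"] by simp
  have dz: "x \<notin> ?K \<Longrightarrow> d x = 0" for x using cc_iter_zero[of x f "[i]"] by (simp add: d_def)
  have fdiff: "f differentiable (at x)" for x using smooth_diff[OF cc_smooth[OF f], of "[]"] by simp
  have b\<psi>: "BC \<psi>" and b\<psi>': "BC (partial \<psi> i)" using bc_C1b[OF \<psi>] bc_C1b_partial[OF \<psi>] by auto
  define A where "A = (\<integral>x. partial f i x * (\<psi> x * \<phi> x) \<partial>\<mu>) + (\<integral>x. f x * (\<psi> x * \<theta> x + partial \<psi> i x * \<phi> x) \<partial>\<mu>)"
  define c where "c = (M1 + M0) * (\<integral>x. \<bar>\<phi> x\<bar> \<partial>\<mu>) + M0 * (\<integral>x. \<bar>\<theta> x\<bar> \<partial>\<mu>)"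
  have c0: "c \<ge> 0" unfolding c_def using M0p M1p by (intro add_nonneg_nonneg mult_nonneg_nonneg) auto
  have i1: "integrable \<mu> (\<lambda>x. (d x * \<psi> x) * \<phi> x)" by (rule bc_integrable[OF S bc_mult[OF bd b\<psi>] i\<phi>])
  have i2: "integrable \<mu> (\<lambda>x. (f x * partial \<psi> i x) * \<phi> x)" by (rule bc_integrable[OF S bc_mult[OF bf b\<psi>'] i\<phi>])
  have i3: "integrable \<mu> (\<lambda>x. (f x * \<psi> x) * \<theta> x)" by (rule bc_integrable[OF S bc_mult[OF bf b\<psi>] i\<theta>])
  have A_eq: "A = (\<integral>x. (d x * \<psi> x) * \<phi> x \<partial>\<mu>) + (\<integral>x. (f x * partial \<psi> i x) * \<phi> x \<partial>\<mu>)
        + (\<integral>x. (f x * \<psi> x) * \<theta> x \<partial>\<mu>)"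
  proof -
    have "(\<lambda>x. f x * (\<psi> x * \<theta> x + partial \<psi> i x * \<phi> x)) = (\<lambda>x. (f x * \<psi> x) * \<theta> x + (f x * partial \<psi> i x) * \<phi> x)"
      by (rule ext) (simp add: algebra_simps)
    moreover have "(\<lambda>x. partial f i x * (\<psi> x * \<phi> x)) = (\<lambda>x. (d x * \<psi> x) * \<phi> x)"
      by (rule ext) (simp add: d_def algebra_simps)
    ultimately show ?thesis unfolding A_def using i2 i3 by simp
  qed
  have "\<bar>A\<bar> \<le> e * c" if e: "e > 0" for e
  proof -
    obtain R where R: "real_polynomial_function R"
      "\<forall>x\<in>?K. \<bar>R x - \<psi> x\<bar> \<le> e \<and> \<bar>partial R i x - partial \<psi> i x\<bar> \<le> e"
      using approx_C1[of \<psi> i ?K e] \<psi> cc_compact[OF f] e by (auto simp: C1b_def)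
    define R' where "R' = partial R i"
    have rR': "real_polynomial_function R'" unfolding R'_def using rpf_partial[OF R(1)] .
    have Rdiff: "R differentiable (at x)" for x using R(1) differentiable_at_real_polynomial_function by blast
    have gcc: "(\<lambda>x. f x * R x) \<in> Cc_inf" using cc_mult_rpf[OF f R(1)] .
    have pg: "partial (\<lambda>x. f x * R x) i x = d x * R x + f x * R' x" for x
      unfolding d_def R'_def using partial_mult[OF fdiff Rdiff] .
    have zero: "(\<integral>x. (d x * R x + f x * R' x) * \<phi> x \<partial>\<mu>) + (\<integral>x. (f x * R x) * \<theta> x \<partial>\<mu>) = 0"
      using wdf[OF gcc] unfolding pg by simp
    have bdR: "BC (\<lambda>x. d x * R x)" using bc_cc_mult[OF f rpf_cont[OF R(1)], of "[i]"] by (simp add: d_def)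
    have bfR': "BC (\<lambda>x. f x * R' x)" using bc_cc_mult[OF f rpf_cont[OF rR'], of "[]"] by simp
    have bfR: "BC (\<lambda>x. f x * R x)" using bc_cc_mult[OF f rpf_cont[OF R(1)], of "[]"] by simp
    have i4: "integrable \<mu> (\<lambda>x. (d x * R x) * \<phi> x)" by (rule bc_integrable[OF S bdR i\<phi>])
    have i5: "integrable \<mu> (\<lambda>x. (f x * R' x) * \<phi> x)" by (rule bc_integrable[OF S bfR' i\<phi>])
    have i6: "integrable \<mu> (\<lambda>x. (f x * R x) * \<theta> x)" by (rule bc_integrable[OF S bfR i\<theta>])
    define a where "a = (\<lambda>x. d x * (\<psi> x - R x) + f x * (partial \<psi> i x - R' x))"
    define b where "b = (\<lambda>x. f x * (\<psi> x - R x))"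
    have ea: "(\<lambda>x. a x * \<phi> x) = (\<lambda>x. ((d x * \<psi> x) * \<phi> x + (f x * partial \<psi> i x) * \<phi> x) - ((d x * R x) * \<phi> x + (f x * R' x) * \<phi> x))"
      by (rule ext) (simp add: a_def algebra_simps)
    have eb: "(\<lambda>x. b x * \<theta> x) = (\<lambda>x. (f x * \<psi> x) * \<theta> x - (f x * R x) * \<theta> x)"
      by (rule ext) (simp add: b_def algebra_simps)
    have ia: "integrable \<mu> (\<lambda>x. a x * \<phi> x)" unfolding ea using i1 i2 i4 i5 by auto
    have ib: "integrable \<mu> (\<lambda>x. b x * \<theta> x)" unfolding eb using i3 i6 by auto
    have z2: "(\<integral>x. (d x * R x + f x * R' x) * \<phi> x \<partial>\<mu>) = (\<integral>x. (d x * R x) * \<phi> x \<partial>\<mu>) + (\<integral>x. (f x * R' x) * \<phi> x \<partial>\<mu>)"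
    proof -
      have "(\<lambda>x. (d x * R x + f x * R' x) * \<phi> x) = (\<lambda>x. (d x * R x) * \<phi> x + (f x * R' x) * \<phi> x)"
        by (rule ext) (simp add: algebra_simps)
      then show ?thesis using i4 i5 by simp
    qed
    have AI: "A = (\<integral>x. a x * \<phi> x \<partial>\<mu>) + (\<integral>x. b x * \<theta> x \<partial>\<mu>)"
      unfolding ea eb A_eq using i1 i2 i3 i4 i5 i6 zero z2 by simp
    have pa: "\<bar>a x\<bar> \<le> e * (M1 + M0)" for x
    proof (cases "x \<in> ?K")
      case True
      have g1: "\<bar>R x - \<psi> x\<bar> \<le> e" and g2: "\<bar>R' x - partial \<psi> i x\<bar> \<le> e"
        using R(2) True unfolding R'_def by blast+
      have h1: "\<bar>\<psi> x - R x\<bar> \<le> e" using g1 abs_minus_commute[of "\<psi> x" "R x"] by linarith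
      have h2: "\<bar>partial \<psi> i x - R' x\<bar> \<le> e" using g2 abs_minus_commute[of "partial \<psi> i x" "R' x"] by linarith
      have "\<bar>a x\<bar> \<le> \<bar>d x\<bar> * \<bar>\<psi> x - R x\<bar> + \<bar>f x\<bar> * \<bar>partial \<psi> i x - R' x\<bar>"
        unfolding a_def abs_mult[symmetric] by (rule abs_triangle_ineq)
      also have "\<dots> \<le> M1 * e + M0 * e"
      proof (rule add_mono)
        show "\<bar>d x\<bar> * \<bar>\<psi> x - R x\<bar> \<le> M1 * e"
          by (rule mult_mono) (use M1 h1 M1p in simp_all)
        show "\<bar>f x\<bar> * \<bar>partial \<psi> i x - R' x\<bar> \<le> M0 * e"
          by (rule mult_mono) (use M0 h2 M0p in simp_all)
      qed
      also have "\<dots> = e * (M1 + M0)" by (simp add: algebra_simps)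
      finally show ?thesis .
    next
      case False
      then have "a x = 0" unfolding a_def using fz[OF False] dz[OF False] by simp
      then show ?thesis using e M0p M1p by simp
    qed
    have pb: "\<bar>b x\<bar> \<le> e * M0" for x
    proof (cases "x \<in> ?K")
      case True
      have g1: "\<bar>R x - \<psi> x\<bar> \<le> e" using R(2) True by blast
      have h1: "\<bar>\<psi> x - R x\<bar> \<le> e" using g1 abs_minus_commute[of "\<psi> x" "R x"] by linarith
      have "\<bar>b x\<bar> = \<bar>f x\<bar> * \<bar>\<psi> x - R x\<bar>" unfolding b_def by (simp add: abs_mult)
      also have "\<dots> \<le> M0 * e" by (rule mult_mono) (use M0 h1 M0p in simp_all)
      also have "\<dots> = e * M0" by (simp add: algebra_simps)
      finally show ?thesis .
    next
      case False
      then have "b x = 0" unfolding b_def using fz[OF False] by simp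
      then show ?thesis using e M0p by simp
    qed
    have ia\<phi>: "integrable \<mu> (\<lambda>x. e * (M1 + M0) * \<bar>\<phi> x\<bar>)" using i\<phi> by simp
    have ib\<theta>: "integrable \<mu> (\<lambda>x. e * M0 * \<bar>\<theta> x\<bar>)" using i\<theta> by simp
    have "\<bar>\<integral>x. a x * \<phi> x \<partial>\<mu>\<bar> \<le> (\<integral>x. e * (M1 + M0) * \<bar>\<phi> x\<bar> \<partial>\<mu>)"
    proof (rule integral_abs_bound_integral[OF ia ia\<phi>])
      fix x show "\<bar>a x * \<phi> x\<bar> \<le> e * (M1 + M0) * \<bar>\<phi> x\<bar>"
        unfolding abs_mult using pa by (intro mult_right_mono) auto
    qed
    moreover have "\<bar>\<integral>x. b x * \<theta> x \<partial>\<mu>\<bar> \<le> (\<integral>x. e * M0 * \<bar>\<theta> x\<bar> \<partial>\<mu>)"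
    proof (rule integral_abs_bound_integral[OF ib ib\<theta>])
      fix x show "\<bar>b x * \<theta> x\<bar> \<le> e * M0 * \<bar>\<theta> x\<bar>"
        unfolding abs_mult using pb by (intro mult_right_mono) auto
    qed
    ultimately have "\<bar>A\<bar> \<le> (\<integral>x. e * (M1 + M0) * \<bar>\<phi> x\<bar> \<partial>\<mu>) + (\<integral>x. e * M0 * \<bar>\<theta> x\<bar> \<partial>\<mu>)"
      unfolding AI by linarith
    also have "\<dots> = e * (M1 + M0) * (\<integral>x. \<bar>\<phi> x\<bar> \<partial>\<mu>) + e * M0 * (\<integral>x. \<bar>\<theta> x\<bar> \<partial>\<mu>)"
    proof -
      have "(\<integral>x. e * (M1 + M0) * \<bar>\<phi> x\<bar> \<partial>\<mu>) = e * (M1 + M0) * (\<integral>x. \<bar>\<phi> x\<bar> \<partial>\<mu>)"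
        by (rule Bochner_Integration.integral_mult_right) (use integrable_abs[OF i\<phi>] in blast)
      moreover have "(\<integral>x. e * M0 * \<bar>\<theta> x\<bar> \<partial>\<mu>) = e * M0 * (\<integral>x. \<bar>\<theta> x\<bar> \<partial>\<mu>)"
        by (rule Bochner_Integration.integral_mult_right) (use integrable_abs[OF i\<theta>] in blast)
      ultimately show ?thesis by simp
    qed
    also have "\<dots> = e * c" unfolding c_def by (simp add: algebra_simps)
    finally show ?thesis .
  qed
  then have "A = 0" using small_zero[OF c0] by blast
  then show "(\<integral>x. partial f i x * (\<psi> x * \<phi> x) \<partial>\<mu>) = - (\<integral>x. f x * (\<psi> x * \<theta> x + partial \<psi> i x * \<phi> x) \<partial>\<mu>)"
    unfolding A_def by linarith
qed

lemma rpf_cont': "real_polynomial_function R \<Longrightarrow> continuous_on UNIV R"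
  using continuous_real_polymonial_function continuous_at_imp_continuous_on by blast

lemma density:
  fixes \<mu> :: "(real^'d) measure" and h c f :: "real^'d \<Rightarrow> real"
  assumes S: "sets \<mu> = sets borel" and ih: "integrable \<mu> h"
    and orth: "\<forall>g\<in>Cc_inf. (\<integral>x. g x * h x \<partial>\<mu>) = 0"
    and f: "f \<in> Cc_inf" and c: "continuous_on UNIV c"
  shows "(\<integral>x. (f x * c x) * h x \<partial>\<mu>) = 0"
proof -
  let ?K = "closure {x. f x \<noteq> 0}"
  obtain M0 where M0: "\<forall>x. \<bar>f x\<bar> \<le> M0" using cc_iter_bounded[OF f, of "[]"] by auto
  have M0p: "M0 \<ge> 0" using M0 by (meson abs_ge_zero order_trans)
  have fz: "x \<notin> ?K \<Longrightarrow> f x = 0" for x using cc_iter_zero[of x f "[]"] by simp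
  define A where "A = (\<integral>x. (f x * c x) * h x \<partial>\<mu>)"
  define C where "C = M0 * (\<integral>x. \<bar>h x\<bar> \<partial>\<mu>)"
  have C0: "C \<ge> 0" unfolding C_def using M0p by simp
  have bfc: "BC (\<lambda>x. f x * c x)" using bc_cc_mult[OF f c, of "[]"] by simp
  have ifc: "integrable \<mu> (\<lambda>x. (f x * c x) * h x)" by (rule bc_integrable[OF S bfc ih])
  have "\<bar>A\<bar> \<le> e * C" if e: "e > 0" for e
  proof -
    obtain P where P: "real_polynomial_function P" "\<And>x. x \<in> ?K \<Longrightarrow> \<bar>c x - P x\<bar> < e"
      using Stone_Weierstrass_real_polynomial_function[OF cc_compact[OF f] continuous_on_subset[OF c] e]
      by blast
    have gcc: "(\<lambda>x. f x * P x) \<in> Cc_inf" by (rule cc_mult_rpf[OF f P(1)])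
    have bfP: "BC (\<lambda>x. f x * P x)" using bc_cc_mult[OF f rpf_cont'[OF P(1)], of "[]"] by simp
    have ifP: "integrable \<mu> (\<lambda>x. (f x * P x) * h x)" by (rule bc_integrable[OF S bfP ih])
    have z: "(\<integral>x. (f x * P x) * h x \<partial>\<mu>) = 0" using bspec[OF orth gcc] by simp
    define a where "a = (\<lambda>x. f x * (c x - P x))"
    have ea: "(\<lambda>x. a x * h x) = (\<lambda>x. (f x * c x) * h x - (f x * P x) * h x)"
      by (rule ext) (simp add: a_def algebra_simps)
    have ia: "integrable \<mu> (\<lambda>x. a x * h x)" unfolding ea using ifc ifP by simp
    have AI: "A = (\<integral>x. a x * h x \<partial>\<mu>)" unfolding ea A_def using ifc ifP z by simp
    have pa: "\<bar>a x\<bar> \<le> e * M0" for x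
    proof (cases "x \<in> ?K")
      case True
      have "\<bar>a x\<bar> = \<bar>f x\<bar> * \<bar>c x - P x\<bar>" unfolding a_def by (simp add: abs_mult)
      also have "\<dots> \<le> M0 * e" by (rule mult_mono) (use M0 P(2)[OF True] M0p in \<open>simp_all add: less_imp_le\<close>)
      also have "\<dots> = e * M0" by (simp add: algebra_simps)
      finally show ?thesis .
    next
      case False
      then have "a x = 0" unfolding a_def using fz[OF False] by simp
      then show ?thesis using e M0p by simp
    qed
    have ib: "integrable \<mu> (\<lambda>x. e * M0 * \<bar>h x\<bar>)" using ih by simp
    have "\<bar>A\<bar> \<le> (\<integral>x. e * M0 * \<bar>h x\<bar> \<partial>\<mu>)"
      unfolding AI
    proof (rule integral_abs_bound_integral[OF ia ib])
      fix x show "\<bar>a x * h x\<bar> \<le> e * M0 * \<bar>h x\<bar>"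
        unfolding abs_mult using pa by (intro mult_right_mono) auto
    qed
    also have "\<dots> = e * M0 * (\<integral>x. \<bar>h x\<bar> \<partial>\<mu>)"
      by (rule Bochner_Integration.integral_mult_right) (use integrable_abs[OF ih] in blast)
    also have "\<dots> = e * C" by (simp add: C_def algebra_simps)
    finally show ?thesis .
  qed
  then have "A = 0" using small_zero[OF C0] by blast
  then show ?thesis by (simp add: A_def)
qed

lemma linear_axis_expand:
  fixes L :: "real^'m \<Rightarrow> real"
  assumes "linear L"
  shows "L v = (\<Sum>j\<in>UNIV. v$j * L (axis j 1))"
proof -
  have "v = (\<Sum>j\<in>UNIV. v$j *\<^sub>R axis j 1)"
    using basis_expansion[of v] by (simp add: scalar_mult_eq_scaleR)
  then have "L v = L (\<Sum>j\<in>UNIV. v$j *\<^sub>R axis j 1)" by simp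
  also have "\<dots> = (\<Sum>j\<in>UNIV. v$j * L (axis j 1))"
    using assms by (simp add: linear_sum linear_scale)
  finally show ?thesis .
qed

lemma vec_has_derivative:
  fixes u :: "'m::finite \<Rightarrow> real^'d \<Rightarrow> real"
  assumes "\<And>j. (u j has_derivative D j) (at x)"
  shows "((\<lambda>x. \<chi> j. u j x) has_derivative (\<lambda>h. \<chi> j. D j h)) (at x)"
proof (rule has_derivative_componentwise_within[THEN iffD2], intro ballI)
  fix b :: "real^'m" assume "b \<in> Basis"
  then obtain k where b: "b = axis k 1" unfolding Basis_vec_def Basis_real_def by blast
  have e1: "(\<lambda>x. (\<chi> j. u j x) \<bullet> b) = u k" unfolding b by (rule ext) (simp add: inner_axis)
  have e2: "(\<lambda>h. (\<chi> j. D j h) \<bullet> b) = D k" unfolding b by (rule ext) (simp add: inner_axis)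
  show "((\<lambda>x. (\<chi> j. u j x) \<bullet> b) has_derivative (\<lambda>h. (\<chi> j. D j h) \<bullet> b)) (at x)"
    unfolding e1 e2 by (rule assms)
qed

lemma chain_partial:
  fixes \<psi> :: "real^'m \<Rightarrow> real" and u :: "'m::finite \<Rightarrow> real^'d \<Rightarrow> real"
  assumes d\<psi>: "\<And>y. \<psi> differentiable (at y)" and du: "\<And>j x. u j differentiable (at x)"
  shows "(\<lambda>x. \<psi> (\<chi> j. u j x)) differentiable (at x)"
    and "partial (\<lambda>x. \<psi> (\<chi> j. u j x)) i x = (\<Sum>j\<in>UNIV. partial \<psi> j (\<chi> k. u k x) * partial (u j) i x)"
proof -
  define U where "U = (\<lambda>x. \<chi> j. u j x)"
  have dU: "(U has_derivative (\<lambda>h. \<chi> j. frechet_derivative (u j) (at x) h)) (at x)"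
    unfolding U_def by (rule vec_has_derivative) (rule frechet_derivative_works[THEN iffD1, OF du])
  have d\<psi>': "(\<psi> has_derivative frechet_derivative \<psi> (at (U x))) (at (U x))"
    by (rule frechet_derivative_works[THEN iffD1, OF d\<psi>])
  have comp: "((\<lambda>x. \<psi> (U x)) has_derivative (\<lambda>h. frechet_derivative \<psi> (at (U x)) (\<chi> j. frechet_derivative (u j) (at x) h))) (at x)"
    using has_derivative_compose[OF dU d\<psi>'] by simp
  then show "(\<lambda>x. \<psi> (\<chi> j. u j x)) differentiable (at x)"
    unfolding U_def differentiable_def by blast
  have pu: "(\<chi> j. frechet_derivative (u j) (at x) (axis i 1)) = (\<chi> j. partial (u j) i x)"
    by (simp add: partial_def)
  have lin: "linear (frechet_derivative \<psi> (at (U x)))" using d\<psi>' by (rule has_derivative_linear)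
  have "partial (\<lambda>x. \<psi> (U x)) i x = frechet_derivative \<psi> (at (U x)) (\<chi> j. partial (u j) i x)"
    using partial_eq[OF comp, of i] unfolding pu .
  also have "\<dots> = (\<Sum>j\<in>UNIV. (\<chi> j. partial (u j) i x) $ j * frechet_derivative \<psi> (at (U x)) (axis j 1))"
    by (rule linear_axis_expand[OF lin])
  also have "\<dots> = (\<Sum>j\<in>UNIV. partial \<psi> j (U x) * partial (u j) i x)"
    by (simp add: partial_def mult.commute)
  finally show "partial (\<lambda>x. \<psi> (\<chi> j. u j x)) i x = (\<Sum>j\<in>UNIV. partial \<psi> j (\<chi> k. u k x) * partial (u j) i x)"
    unfolding U_def .
qed

lemma bc_sum: "finite A \<Longrightarrow> (\<And>j. j \<in> A \<Longrightarrow> BC (f j)) \<Longrightarrow> BC (\<lambda>x. \<Sum>j\<in>A. f j x)"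
  by (induction A rule: finite_induct) (auto intro: bc_add bc_const)

lemma bc_comp:
  assumes "BC g" "continuous_on UNIV U"
  shows "BC (\<lambda>x. g (U x))"
  using assms unfolding BC_def
  by (auto intro: continuous_on_compose2[of UNIV g UNIV U])

lemma bc_bounded: "BC g \<Longrightarrow> bounded (range g)"
  unfolding BC_def bounded_iff by auto

lemma C1b_comp:
  fixes \<psi> :: "real^'m \<Rightarrow> real" and u :: "'m \<Rightarrow> real^'d \<Rightarrow> real"
  assumes \<psi>: "\<psi> \<in> C1b" and u: "\<forall>j. u j \<in> C1b"
  shows "(\<lambda>x. \<psi> (\<chi> j. u j x)) \<in> C1b"
    and "partial (\<lambda>x. \<psi> (\<chi> j. u j x)) i = (\<lambda>x. \<Sum>j\<in>UNIV. partial \<psi> j (\<chi> k. u k x) * partial (u j) i x)"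
    and "BC (partial (\<lambda>x. \<psi> (\<chi> j. u j x)) i)"
proof -
  have d\<psi>: "\<And>y. \<psi> differentiable (at y)" using \<psi> by (simp add: C1b_def)
  have du: "\<And>j x. u j differentiable (at x)" using u by (simp add: C1b_def)
  have cU: "continuous_on UNIV (\<lambda>x. \<chi> j. u j x)"
    using u C1b_cont by (auto intro!: continuous_on_vec_lambda)
  have pe: "partial (\<lambda>x. \<psi> (\<chi> j. u j x)) i' = (\<lambda>x. \<Sum>j\<in>UNIV. partial \<psi> j (\<chi> k. u k x) * partial (u j) i' x)" for i'
    by (rule ext) (rule chain_partial(2)[of \<psi> u, OF d\<psi> du])
  then show "partial (\<lambda>x. \<psi> (\<chi> j. u j x)) i = (\<lambda>x. \<Sum>j\<in>UNIV. partial \<psi> j (\<chi> k. u k x) * partial (u j) i x)" .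
  have bp: "BC (partial (\<lambda>x. \<psi> (\<chi> j. u j x)) i')" for i'
    unfolding pe
    by (intro bc_sum bc_mult bc_comp[OF bc_C1b_partial[OF \<psi>] cU] bc_C1b_partial) (use u in auto)
  then show "BC (partial (\<lambda>x. \<psi> (\<chi> j. u j x)) i)" .
  have b0: "BC (\<lambda>x. \<psi> (\<chi> j. u j x))" by (rule bc_comp[OF bc_C1b[OF \<psi>] cU])
  show "(\<lambda>x. \<psi> (\<chi> j. u j x)) \<in> C1b"
    unfolding C1b_def
  proof (intro CollectI conjI allI)
    fix x show "(\<lambda>x. \<psi> (\<chi> j. u j x)) differentiable (at x)"
      by (rule chain_partial(1)[of \<psi> u, OF d\<psi> du])
  next
    fix i' show "continuous_on UNIV (partial (\<lambda>x. \<psi> (\<chi> j. u j x)) i')"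
      using bp[of i'] by (simp add: BC_def)
  next
    show "bounded (range (\<lambda>x. \<psi> (\<chi> j. u j x)))" by (rule bc_bounded[OF b0])
  next
    fix i' show "bounded (range (partial (\<lambda>x. \<psi> (\<chi> j. u j x)) i'))" by (rule bc_bounded[OF bp])
  qed
qed

lemma W1p_Lp: "\<phi> \<in> W1p \<mu> p \<Longrightarrow> \<phi> \<in> Lp \<mu> p"
  by (simp add: W1p_def)

lemma wd_Lp: "weak_deriv \<mu> p \<phi> i \<theta> \<Longrightarrow> \<theta> \<in> Lp \<mu> p"
  by (simp add: weak_deriv_def)

lemma wd_eq: "weak_deriv \<mu> p \<phi> i \<theta> \<Longrightarrow> g \<in> Cc_inf \<Longrightarrow> (\<integral>x. partial g i x * \<phi> x \<partial>\<mu>) = - (\<integral>x. g x * \<theta> x \<partial>\<mu>)"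
  by (simp add: weak_deriv_def)

lemma partA_W1p:
  fixes \<mu> :: "(real^'d) measure"
  assumes P: "prob_space \<mu>" and S: "sets \<mu> = sets borel" and p: "p \<ge> 1"
    and \<phi>: "\<phi> \<in> W1p \<mu> p" and \<psi>: "\<psi> \<in> C1b"
  shows "(\<lambda>x. \<psi> x * \<phi> x) \<in> W1p \<mu> p"
  unfolding W1p_def
proof (intro CollectI conjI allI)
  show "(\<lambda>x. \<psi> x * \<phi> x) \<in> Lp \<mu> p" by (rule bc_Lp[OF S bc_C1b[OF \<psi>] W1p_Lp[OF \<phi>] p])
  fix i
  obtain \<theta> where "weak_deriv \<mu> p \<phi> i \<theta>" using \<phi> by (auto simp: W1p_def)
  then show "\<exists>\<theta>. weak_deriv \<mu> p (\<lambda>x. \<psi> x * \<phi> x) i \<theta>"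
    using partA_weak[OF P S p _ W1p_Lp[OF \<phi>] \<psi>] by blast
qed

lemma partB:
  fixes \<mu> :: "(real^'d) measure" and \<psi> :: "real^'m \<Rightarrow> real" and u :: "'m \<Rightarrow> real^'d \<Rightarrow> real"
  assumes P: "prob_space \<mu>" and S: "sets \<mu> = sets borel" and p: "p \<ge> 1"
    and one: "(\<lambda>_. 1) \<in> W1p \<mu> p" and \<psi>: "\<psi> \<in> C1b" and u: "\<forall>j. u j \<in> C1b"
    and wd1: "weak_deriv \<mu> p (\<lambda>_. 1) i \<theta>1" and wdu: "\<forall>j. weak_deriv \<mu> p (u j) i (\<theta>u j)"
  shows "weak_deriv \<mu> p (\<lambda>x. \<psi> (\<chi> j. u j x)) i
           (\<lambda>x. (\<Sum>j\<in>UNIV. partial \<psi> j (\<chi> k. u k x) * \<theta>u j x)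
              + (\<psi> (\<chi> k. u k x) - (\<Sum>j\<in>UNIV. partial \<psi> j (\<chi> k. u k x) * u j x)) * \<theta>1 x)"
proof -
  define \<Psi> where "\<Psi> = (\<lambda>x. \<psi> (\<chi> j. u j x))"
  define c where "c = (\<lambda>j x. partial \<psi> j (\<chi> k. u k x))"
  define RHS where "RHS = (\<lambda>x. (\<Sum>j\<in>UNIV. c j x * \<theta>u j x) + (\<Psi> x - (\<Sum>j\<in>UNIV. c j x * u j x)) * \<theta>1 x)"
  have oneL: "(\<lambda>_. 1) \<in> Lp \<mu> p" using W1p_Lp[OF one] .
  have i1: "integrable \<mu> (\<lambda>_. 1::real)" using Lp_integrable[OF P p oneL] .
  have \<theta>1L: "\<theta>1 \<in> Lp \<mu> p" using wd_Lp[OF wd1] .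
  have \<theta>uL: "\<theta>u j \<in> Lp \<mu> p" for j using wd_Lp wdu by blast
  have C\<Psi>: "\<Psi> \<in> C1b" unfolding \<Psi>_def using C1b_comp(1)[OF \<psi> u] .
  have p\<Psi>: "partial \<Psi> i x = (\<Sum>j\<in>UNIV. c j x * partial (u j) i x)" for x
    unfolding \<Psi>_def c_def using C1b_comp(2)[OF \<psi> u, of i] by simp
  have cU: "continuous_on UNIV (\<lambda>x. \<chi> j. u j x)"
    using u C1b_cont by (auto intro!: continuous_on_vec_lambda)
  have bc: "BC (c j)" for j
    unfolding c_def by (rule bc_comp[OF bc_C1b_partial[OF \<psi>] cU])
  have bu: "BC (u j)" for j using u bc_C1b by blast
  have bu': "BC (partial (u j) i)" for j using u bc_C1b_partial by blast
  have b\<Psi>: "BC \<Psi>" using bc_C1b[OF C\<Psi>] .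
  have w\<Psi>: "weak_deriv \<mu> p \<Psi> i (\<lambda>x. \<Psi> x * \<theta>1 x + partial \<Psi> i x)"
    using partA_weak[OF P S p wd1 oneL C\<Psi>] by simp
  have wu: "weak_deriv \<mu> p (u j) i (\<lambda>x. u j x * \<theta>1 x + partial (u j) i x)" for j
    using partA_weak[OF P S p wd1 oneL, of "u j"] u by simp
  define h where "h = (\<lambda>j x. \<theta>u j x - (u j x * \<theta>1 x + partial (u j) i x))"
  have G1L: "(\<lambda>x. u j x * \<theta>1 x + partial (u j) i x) \<in> Lp \<mu> p" for j using wd_Lp[OF wu] .
  have ih: "integrable \<mu> (h j)" for j
    unfolding h_def using Lp_integrable[OF P p \<theta>uL] Lp_integrable[OF P p G1L] by auto
  have orth: "\<forall>g\<in>Cc_inf. (\<integral>x. g x * h j x \<partial>\<mu>) = 0" for j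
  proof
    fix g :: "real^'d \<Rightarrow> real" assume g: "g \<in> Cc_inf"
    have bg: "BC g" using bc_cc[OF g, of "[]"] by simp
    have a1: "integrable \<mu> (\<lambda>x. g x * \<theta>u j x)" by (rule bc_integrable[OF S bg Lp_integrable[OF P p \<theta>uL]])
    have a2: "integrable \<mu> (\<lambda>x. g x * (u j x * \<theta>1 x + partial (u j) i x))"
      by (rule bc_integrable[OF S bg Lp_integrable[OF P p G1L]])
    have "(\<lambda>x. g x * h j x) = (\<lambda>x. g x * \<theta>u j x - g x * (u j x * \<theta>1 x + partial (u j) i x))"
      by (rule ext) (simp add: h_def algebra_simps)
    then have "(\<integral>x. g x * h j x \<partial>\<mu>) = (\<integral>x. g x * \<theta>u j x \<partial>\<mu>) - (\<integral>x. g x * (u j x * \<theta>1 x + partial (u j) i x) \<partial>\<mu>)"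
      using a1 a2 by simp
    also have "\<dots> = 0"
      using wd_eq[OF wdu[rule_format] g] wd_eq[OF wu g] by simp
    finally show "(\<integral>x. g x * h j x \<partial>\<mu>) = 0" .
  qed
  have RHSL: "RHS \<in> Lp \<mu> p"
  proof -
    have "(\<lambda>x. \<Sum>j\<in>UNIV. c j x * \<theta>u j x) \<in> Lp \<mu> p"
      by (rule Lp_sum) (use bc_Lp[OF S bc \<theta>uL p] p in auto)
    moreover have "BC (\<lambda>x. \<Psi> x - (\<Sum>j\<in>UNIV. c j x * u j x))"
      by (intro bc_diff b\<Psi> bc_sum bc_mult bc bu) auto
    then have "(\<lambda>x. (\<Psi> x - (\<Sum>j\<in>UNIV. c j x * u j x)) * \<theta>1 x) \<in> Lp \<mu> p"
      by (rule bc_Lp[OF S _ \<theta>1L p])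
    ultimately show ?thesis unfolding RHS_def using p by (rule Lp_add)
  qed
  have eqf: "(\<integral>x. partial f i x * \<Psi> x \<partial>\<mu>) = - (\<integral>x. f x * RHS x \<partial>\<mu>)" if f: "f \<in> Cc_inf" for f
  proof -
    have bf: "BC f" using bc_cc[OF f, of "[]"] by simp
    define G where "G = (\<lambda>x. \<Psi> x * \<theta>1 x + partial \<Psi> i x)"
    have GL: "G \<in> Lp \<mu> p" unfolding G_def using wd_Lp[OF w\<Psi>] .
    have e1: "(\<integral>x. partial f i x * \<Psi> x \<partial>\<mu>) = - (\<integral>x. f x * G x \<partial>\<mu>)"
      unfolding G_def using wd_eq[OF w\<Psi> f] .
    have pw: "f x * RHS x = f x * G x + (\<Sum>j\<in>UNIV. (f x * c j x) * h j x)" for x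
    proof -
      have "(\<Sum>j\<in>UNIV. (f x * c j x) * h j x)
          = f x * (\<Sum>j\<in>UNIV. c j x * \<theta>u j x) - f x * (\<Sum>j\<in>UNIV. c j x * u j x) * \<theta>1 x
            - f x * (\<Sum>j\<in>UNIV. c j x * partial (u j) i x)"
        by (simp add: h_def sum_distrib_left sum_distrib_right sum_subtractf sum.distrib algebra_simps)
      then show ?thesis
        unfolding RHS_def G_def p\<Psi> by (simp add: algebra_simps)
    qed
    have iA: "integrable \<mu> (\<lambda>x. f x * G x)" by (rule bc_integrable[OF S bf Lp_integrable[OF P p GL]])
    have iB: "integrable \<mu> (\<lambda>x. (f x * c j x) * h j x)" for j
      by (rule bc_integrable[OF S bc_mult[OF bf bc] ih])
    have zB: "(\<integral>x. (f x * c j x) * h j x \<partial>\<mu>) = 0" for j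
      by (rule density[OF S ih orth f]) (use bc in \<open>simp add: BC_def\<close>)
    have "(\<integral>x. f x * RHS x \<partial>\<mu>) = (\<integral>x. f x * G x + (\<Sum>j\<in>UNIV. (f x * c j x) * h j x) \<partial>\<mu>)"
      unfolding pw ..
    also have "\<dots> = (\<integral>x. f x * G x \<partial>\<mu>) + (\<integral>x. (\<Sum>j\<in>UNIV. (f x * c j x) * h j x) \<partial>\<mu>)"
      using iA iB by (intro Bochner_Integration.integral_add Bochner_Integration.integrable_sum) auto
    also have "(\<integral>x. (\<Sum>j\<in>UNIV. (f x * c j x) * h j x) \<partial>\<mu>) = (\<Sum>j\<in>UNIV. (\<integral>x. (f x * c j x) * h j x \<partial>\<mu>))"
      using iB by (intro Bochner_Integration.integral_sum) auto
    also have "\<dots> = 0" using zB by simp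
    finally show ?thesis using e1 by simp
  qed
  show ?thesis
    unfolding weak_deriv_def
    using RHSL eqf unfolding RHS_def \<Psi>_def c_def by auto
qed

theorem lemma3:
  fixes \<mu> :: "(real^'d) measure" and p :: real
  assumes "prob_space \<mu>" and "sets \<mu> = sets borel" and "p \<ge> 1"
  shows
    "(\<forall>\<phi> \<psi>. \<phi> \<in> W1p \<mu> p \<and> \<psi> \<in> C1b \<longrightarrow>
        (\<lambda>x. \<psi> x * \<phi> x) \<in> W1p \<mu> p \<and>
        (\<forall>i \<theta>. weak_deriv \<mu> p \<phi> i \<theta> \<longrightarrow>
           weak_deriv \<mu> p (\<lambda>x. \<psi> x * \<phi> x) i (\<lambda>x. \<psi> x * \<theta> x + partial \<psi> i x * \<phi> x)))
   \<and> ((\<lambda>_. 1) \<in> W1p \<mu> p \<longrightarrow>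
       (\<forall>\<psi>. \<psi> \<in> C1b \<longrightarrow> \<psi> \<in> W1p \<mu> p \<and>
          (\<forall>i \<theta>. weak_deriv \<mu> p (\<lambda>_. 1) i \<theta> \<longrightarrow>
             weak_deriv \<mu> p \<psi> i (\<lambda>x. \<psi> x * \<theta> x + partial \<psi> i x))))
   \<and> ((\<lambda>_. 1) \<in> W1p \<mu> p \<longrightarrow>
       (\<forall>(\<psi>::real^'m \<Rightarrow> real) (u::'m \<Rightarrow> real^'d \<Rightarrow> real).
          \<psi> \<in> C1b \<and> (\<forall>j. u j \<in> C1b) \<longrightarrow>
          (\<lambda>x. \<psi> (\<chi> j. u j x)) \<in> W1p \<mu> p \<and>
          (\<forall>i \<theta>1 \<theta>u. weak_deriv \<mu> p (\<lambda>_. 1) i \<theta>1 \<and> (\<forall>j. weak_deriv \<mu> p (u j) i (\<theta>u j)) \<longrightarrow>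
             weak_deriv \<mu> p (\<lambda>x. \<psi> (\<chi> j. u j x)) i
               (\<lambda>x. (\<Sum>j\<in>UNIV. partial \<psi> j (\<chi> k. u k x) * \<theta>u j x)
                    + (\<psi> (\<chi> k. u k x) - (\<Sum>j\<in>UNIV. partial \<psi> j (\<chi> k. u k x) * u j x)) * \<theta>1 x))))"
proof (intro conjI)
  note P = assms(1) and S = assms(2) and p = assms(3)
  show "\<forall>\<phi> \<psi>. \<phi> \<in> W1p \<mu> p \<and> \<psi> \<in> C1b \<longrightarrow>
        (\<lambda>x. \<psi> x * \<phi> x) \<in> W1p \<mu> p \<and>
        (\<forall>i \<theta>. weak_deriv \<mu> p \<phi> i \<theta> \<longrightarrow>
           weak_deriv \<mu> p (\<lambda>x. \<psi> x * \<phi> x) i (\<lambda>x. \<psi> x * \<theta> x + partial \<psi> i x * \<phi> x))"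
    using partA_W1p[OF P S p] partA_weak[OF P S p] W1p_Lp by blast
  have A2: "\<psi> \<in> W1p \<mu> p \<and> (\<forall>i \<theta>. weak_deriv \<mu> p (\<lambda>_. 1) i \<theta> \<longrightarrow>
             weak_deriv \<mu> p \<psi> i (\<lambda>x. \<psi> x * \<theta> x + partial \<psi> i x))"
    if one: "(\<lambda>_. 1) \<in> W1p \<mu> p" and \<psi>: "\<psi> \<in> C1b" for \<psi> :: "real^'d \<Rightarrow> real"
  proof (intro conjI allI impI)
    show "\<psi> \<in> W1p \<mu> p" using partA_W1p[OF P S p one \<psi>] by simp
    fix i \<theta> assume "weak_deriv \<mu> p (\<lambda>_. 1) i \<theta>"
    then show "weak_deriv \<mu> p \<psi> i (\<lambda>x. \<psi> x * \<theta> x + partial \<psi> i x)"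
      using partA_weak[OF P S p _ W1p_Lp[OF one] \<psi>] by simp
  qed
  then show "(\<lambda>_. 1) \<in> W1p \<mu> p \<longrightarrow>
       (\<forall>\<psi>. \<psi> \<in> C1b \<longrightarrow> \<psi> \<in> W1p \<mu> p \<and>
          (\<forall>i \<theta>. weak_deriv \<mu> p (\<lambda>_. 1) i \<theta> \<longrightarrow>
             weak_deriv \<mu> p \<psi> i (\<lambda>x. \<psi> x * \<theta> x + partial \<psi> i x)))"
    by blast
  show "(\<lambda>_. 1) \<in> W1p \<mu> p \<longrightarrow>
       (\<forall>(\<psi>::real^'m \<Rightarrow> real) (u::'m \<Rightarrow> real^'d \<Rightarrow> real).
          \<psi> \<in> C1b \<and> (\<forall>j. u j \<in> C1b) \<longrightarrow>
          (\<lambda>x. \<psi> (\<chi> j. u j x)) \<in> W1p \<mu> p \<and>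
          (\<forall>i \<theta>1 \<theta>u. weak_deriv \<mu> p (\<lambda>_. 1) i \<theta>1 \<and> (\<forall>j. weak_deriv \<mu> p (u j) i (\<theta>u j)) \<longrightarrow>
             weak_deriv \<mu> p (\<lambda>x. \<psi> (\<chi> j. u j x)) i
               (\<lambda>x. (\<Sum>j\<in>UNIV. partial \<psi> j (\<chi> k. u k x) * \<theta>u j x)
                    + (\<psi> (\<chi> k. u k x) - (\<Sum>j\<in>UNIV. partial \<psi> j (\<chi> k. u k x) * u j x)) * \<theta>1 x)))"
  proof (intro impI allI conjI; elim conjE)
    fix \<psi> :: "real^'m \<Rightarrow> real" and u :: "'m \<Rightarrow> real^'d \<Rightarrow> real"
    assume one: "(\<lambda>_. 1) \<in> W1p \<mu> p" and \<psi>: "\<psi> \<in> C1b" and u: "\<forall>j. u j \<in> C1b"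
    show "(\<lambda>x. \<psi> (\<chi> j. u j x)) \<in> W1p \<mu> p"
      using A2[OF one C1b_comp(1)[OF \<psi> u]] by blast
    fix i \<theta>1 \<theta>u
    assume "weak_deriv \<mu> p (\<lambda>_. 1) i \<theta>1" "\<forall>j. weak_deriv \<mu> p (u j) i (\<theta>u j)"
    then show "weak_deriv \<mu> p (\<lambda>x. \<psi> (\<chi> j. u j x)) i
               (\<lambda>x. (\<Sum>j\<in>UNIV. partial \<psi> j (\<chi> k. u k x) * \<theta>u j x)
                    + (\<psi> (\<chi> k. u k x) - (\<Sum>j\<in>UNIV. partial \<psi> j (\<chi> k. u k x) * u j x)) * \<theta>1 x)"
      by (rule partB[OF P S p one \<psi> u])
  qed
qed

end
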